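(* Let $A=\begin{bmatrix}2&0\\0&0\end{bmatrix}$ and $B=\begin{bmatrix}0&1\\1&0\end{bmatrix}$. Let $M$ be any $\mathfrak{H}_2$-valued regular Borel measure on $[0,2]$ with $e^{tA+B}=\int_{[0,2]}e^{t\lambda}M(d\lambda)$ for all real $t$ (such a measure exists). Then $\frac{d}{dt}e^{tA+B}\big|_{t=0}=D:=\begin{bmatrix} e & \frac{e-e^{-1}}{2}\\ \frac{e-e^{-1}}{2} & e^{-1}\end{bmatrix}$, $D=\int_{[0,2]}\lambda\,M(d\lambda)$, $\det D=\frac{6-e^2-e^{-2}}{4}<0$, and consequently $M$ is not a non-negative measure.
   Context: $\mathfrak{H}_2$ is the set of $2\times 2$ Hermitian matrices. A matrix $S=(s_{pq})\in\mathfrak{M}_n$ is non-negative if $\sum_{p,q}s_{pq}\xi_p\overline{\xi_q}\ge 0$ for all $\xi\in\mathbb{C}^n$. A matrix-valued measure $M$ is non-negative if $M(\delta)$ is a non-negative matrix for every Borel set $\delta$. *)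

theory Defs
  imports "HOL-Analysis.Analysis"
begin

type_synonym cmat2 = "complex^2^2"

primrec mpow :: "cmat2 \<Rightarrow> nat \<Rightarrow> cmat2" where
  "mpow X 0 = mat 1"
| "mpow X (Suc k) = X ** mpow X k"

definition mexp :: "cmat2 \<Rightarrow> cmat2" where
  "mexp X = (\<Sum>k. (1 / fact k) *\<^sub>R mpow X k)"

definition hermitian2 :: "cmat2 \<Rightarrow> bool" where
  "hermitian2 S \<longleftrightarrow> (\<forall>i j. S $ i $ j = cnj (S $ j $ i))"

definition nonneg_mat :: "cmat2 \<Rightarrow> bool" where
  "nonneg_mat S \<longleftrightarrow> (\<forall>\<xi> :: complex^2.
     Im (\<Sum>p\<in>UNIV. \<Sum>q\<in>UNIV. S $ p $ q * \<xi> $ p * cnj (\<xi> $ q)) = 0 \<and>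
     Re (\<Sum>p\<in>UNIV. \<Sum>q\<in>UNIV. S $ p $ q * \<xi> $ p * cnj (\<xi> $ q)) \<ge> 0)"

definition borel02 :: "real set set" where
  "borel02 = {S. S \<in> sets borel \<and> S \<subseteq> {0..2}}"

definition H2_regular_borel_measure :: "(real set \<Rightarrow> cmat2) \<Rightarrow> bool" where
  "H2_regular_borel_measure M \<longleftrightarrow>
     (\<forall>S\<in>borel02. hermitian2 (M S)) \<and>
     M {} = 0 \<and>
     (\<forall>F :: nat \<Rightarrow> real set. range F \<subseteq> borel02 \<longrightarrow> disjoint_family F \<longrightarrow>
        (\<lambda>n. M (F n)) sums M (\<Union>n. F n)) \<and>
     (\<forall>S\<in>borel02. \<forall>\<epsilon>>0. \<exists>K U. compact K \<and> open U \<and> K \<subseteq> S \<and> S \<subseteq> U \<and>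
        (\<forall>E\<in>borel02. E \<subseteq> U - K \<longrightarrow> norm (M E) < \<epsilon>))"

definition nonneg_measure :: "(real set \<Rightarrow> cmat2) \<Rightarrow> bool" where
  "nonneg_measure M \<longleftrightarrow> (\<forall>S\<in>borel02. nonneg_mat (M S))"

definition tagged_borel_partition :: "real \<Rightarrow> (real set \<times> real) list \<Rightarrow> bool" where
  "tagged_borel_partition d P \<longleftrightarrow>
     (\<forall>(S, x)\<in>set P. S \<in> borel02 \<and> x \<in> S \<and> diameter S < d) \<and>
     (\<forall>i<length P. \<forall>j<length P. i \<noteq> j \<longrightarrow> fst (P ! i) \<inter> fst (P ! j) = {}) \<and>
     (\<Union>(fst ` set P)) = {0..2}"

definition has_mintegral :: "(real set \<Rightarrow> cmat2) \<Rightarrow> (real \<Rightarrow> real) \<Rightarrow> cmat2 \<Rightarrow> bool" where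
  "has_mintegral M f I \<longleftrightarrow>
     (\<forall>\<epsilon>>0. \<exists>d>0. \<forall>P. tagged_borel_partition d P \<longrightarrow>
        norm (sum_list (map (\<lambda>(S, x). f x *\<^sub>R M S) P) - I) < \<epsilon>)"

definition matA :: cmat2 where
  "matA = (\<chi> i j. if i = 1 \<and> j = 1 then 2 else 0)"

definition matB :: cmat2 where
  "matB = (\<chi> i j. if i \<noteq> j then 1 else 0)"

definition matD :: cmat2 where
  "matD = (\<chi> i j. if i = 1 \<and> j = 1 then complex_of_real (exp 1)
                   else if i = 2 \<and> j = 2 then complex_of_real (exp (-1))
                   else complex_of_real ((exp 1 - exp (-1)) / 2))"

end

theory Submission
  imports Defs
begin


lemma X2: "(t *\<^sub>R matA + matB) ** (t *\<^sub>R matA + matB) = (2*t) *\<^sub>R (t *\<^sub>R matA + matB) + mat 1"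
  by (simp add: vec_eq_iff forall_2 matrix_matrix_mult_def sum_2 matA_def matB_def mat_def complex_eq_iff)

definition rr :: "real \<Rightarrow> real" where "rr t = sqrt (1 + t\<^sup>2)"
definition lp :: "real \<Rightarrow> real" where "lp t = t + rr t"
definition lm :: "real \<Rightarrow> real" where "lm t = t - rr t"
definition aa :: "real \<Rightarrow> nat \<Rightarrow> real" where "aa t k = (lp t * lm t ^ k - lm t * lp t ^ k) / (2 * rr t)"
definition bb :: "real \<Rightarrow> nat \<Rightarrow> real" where "bb t k = (lp t ^ k - lm t ^ k) / (2 * rr t)"

lemma rr_pos: "rr t > 0" unfolding rr_def by (simp add: add_pos_nonneg)
lemma rr_sq: "(rr t)\<^sup>2 = 1 + t\<^sup>2" unfolding rr_def by (simp add: add_nonneg_nonneg)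
lemma lp_lm: "lp t * lm t = -1" unfolding lp_def lm_def using rr_sq[of t] by (simp add: algebra_simps power2_eq_square)
lemma lp_lm_sum: "lp t + lm t = 2 * t" unfolding lp_def lm_def by simp

lemma aa_Suc: "aa t (Suc k) = bb t k"
proof -
  have "lp t * lm t ^ Suc k - lm t * lp t ^ Suc k = (lp t * lm t) * (lm t ^ k - lp t ^ k)"
    by (simp add: algebra_simps)
  also have "\<dots> = lp t ^ k - lm t ^ k" using lp_lm[of t] by simp
  finally show ?thesis unfolding aa_def bb_def by simp
qed

lemma bb_Suc: "bb t (Suc k) = aa t k + 2 * t * bb t k"
proof -
  have "lp t ^ Suc k - lm t ^ Suc k = (lp t * lm t ^ k - lm t * lp t ^ k) + (lp t + lm t) * (lp t ^ k - lm t ^ k)"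
    by (simp add: algebra_simps)
  then have "lp t ^ Suc k - lm t ^ Suc k = (lp t * lm t ^ k - lm t * lp t ^ k) + 2 * t * (lp t ^ k - lm t ^ k)"
    using lp_lm_sum[of t] by simp
  then show ?thesis unfolding aa_def bb_def by (simp add: add_divide_distrib)
qed

lemma aa0: "aa t 0 = 1" unfolding aa_def using rr_pos[of t] by (simp add: lp_def lm_def)
lemma bb0: "bb t 0 = 0" unfolding bb_def by simp

lemma mul_lin: "(X::cmat2) ** (a *\<^sub>R mat 1 + b *\<^sub>R X) = a *\<^sub>R X + b *\<^sub>R (X ** X)"
  by (simp add: matrix_add_ldistrib matrix_scalar_ac scalar_matrix_assoc)

lemma mpow_formula: "mpow (t *\<^sub>R matA + matB) k = aa t k *\<^sub>R mat 1 + bb t k *\<^sub>R (t *\<^sub>R matA + matB)"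
proof (induction k)
  case 0 then show ?case by (simp add: aa0 bb0)
next
  case (Suc k)
  let ?X = "t *\<^sub>R matA + matB"
  have "mpow ?X (Suc k) = ?X ** (aa t k *\<^sub>R mat 1 + bb t k *\<^sub>R ?X)" using Suc by simp
  also have "\<dots> = aa t k *\<^sub>R ?X + bb t k *\<^sub>R (?X ** ?X)"
    by (rule mul_lin)
  also have "\<dots> = bb t k *\<^sub>R mat 1 + (aa t k + 2 * t * bb t k) *\<^sub>R ?X"
    unfolding X2 by (simp add: algebra_simps)
  finally show ?case by (simp add: aa_Suc bb_Suc)
qed

definition alpha :: "real \<Rightarrow> real" where "alpha t = (lp t * exp (lm t) - lm t * exp (lp t)) / (2 * rr t)"
definition beta :: "real \<Rightarrow> real" where "beta t = (exp (lp t) - exp (lm t)) / (2 * rr t)"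

lemma exp_sums: "(\<lambda>n. x^n / fact n) sums exp (x::real)"
  using exp_converges[of x] by (simp add: divide_inverse mult.commute)

lemma aa_sums: "(\<lambda>k. aa t k / fact k) sums alpha t"
proof -
  have "(\<lambda>k. (lp t * (lm t ^ k / fact k) - lm t * (lp t ^ k / fact k)) / (2 * rr t)) sums alpha t"
    unfolding alpha_def by (intro sums_divide sums_diff sums_mult exp_sums)
  then show ?thesis unfolding aa_def by (simp add: field_simps)
qed

lemma bb_sums: "(\<lambda>k. bb t k / fact k) sums beta t"
proof -
  have "(\<lambda>k. ((lp t ^ k / fact k) - (lm t ^ k / fact k)) / (2 * rr t)) sums beta t"
    unfolding beta_def by (intro sums_divide sums_diff sums_mult exp_sums)
  then show ?thesis unfolding bb_def by (simp add: field_simps)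
qed

lemma mexp_formula: "mexp (t *\<^sub>R matA + matB) = alpha t *\<^sub>R mat 1 + beta t *\<^sub>R (t *\<^sub>R matA + matB)"
proof -
  let ?X = "t *\<^sub>R matA + matB"
  have "(\<lambda>k. (aa t k / fact k) *\<^sub>R mat 1 + (bb t k / fact k) *\<^sub>R ?X) sums (alpha t *\<^sub>R mat 1 + beta t *\<^sub>R ?X)"
    by (intro sums_add sums_scaleR_left aa_sums bb_sums)
  moreover have "(\<lambda>k. (1 / fact k) *\<^sub>R mpow ?X k) = (\<lambda>k. (aa t k / fact k) *\<^sub>R mat 1 + (bb t k / fact k) *\<^sub>R ?X)"
    by (rule ext) (simp add: mpow_formula scaleR_add_right)
  ultimately show ?thesis unfolding mexp_def by (simp add: sums_unique[symmetric])
qed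

lemma deriv_formula: "((\<lambda>t. alpha t *\<^sub>R mat 1 + beta t *\<^sub>R (t *\<^sub>R matA + matB)) has_vector_derivative matD) (at 0)"
proof -
  have r: "(rr has_real_derivative 0) (at 0)"
  proof -
    have "((\<lambda>t. sqrt (1 + t\<^sup>2)) has_real_derivative (inverse (sqrt (1 + 0\<^sup>2)) / 2 * (2 * 0))) (at 0)"
      by (auto intro!: derivative_eq_intros)
    then show ?thesis unfolding rr_def[abs_def] by simp
  qed
  have r0: "rr 0 = 1" by (simp add: rr_def)
  have p: "(lp has_real_derivative 1) (at 0)"
    unfolding lp_def[abs_def] using r by (auto intro!: derivative_eq_intros)
  have m: "(lm has_real_derivative 1) (at 0)"
    unfolding lm_def[abs_def] using r by (auto intro!: derivative_eq_intros)
  have p0: "lp 0 = 1" and m0: "lm 0 = -1" by (simp_all add: lp_def lm_def r0)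
  have a: "(alpha has_real_derivative exp (-1)) (at 0)"
    unfolding alpha_def[abs_def] using p m r rr_pos[of 0]
    by (auto intro!: derivative_eq_intros simp: p0 m0 r0 field_simps exp_minus)
  have b: "(beta has_real_derivative ((exp 1 - exp (-1)) / 2)) (at 0)"
    unfolding beta_def[abs_def] using p m r rr_pos[of 0]
    by (auto intro!: derivative_eq_intros simp: p0 m0 r0 field_simps exp_minus)
  have lin0: "((\<lambda>x. x *\<^sub>R matA) has_vector_derivative ((0::real) *\<^sub>R 0 + 1 *\<^sub>R matA)) (at 0)"
    by (rule has_vector_derivative_scaleR[OF DERIV_ident has_vector_derivative_const])
  then have lin: "((\<lambda>x. x *\<^sub>R matA) has_vector_derivative 1 *\<^sub>R matA) (at 0)" by simp
  have b0: "beta 0 = (exp 1 - exp (-1)) / 2" by (simp add: beta_def p0 m0 r0)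
  have "((\<lambda>t. alpha t *\<^sub>R mat 1 + beta t *\<^sub>R (t *\<^sub>R matA + matB)) has_vector_derivative
     (alpha 0 *\<^sub>R 0 + exp (-1) *\<^sub>R mat 1 + (beta 0 *\<^sub>R (1 *\<^sub>R matA + 0) + ((exp 1 - exp (-1)) / 2) *\<^sub>R (0 *\<^sub>R matA + matB)))) (at 0)"
    by (intro has_vector_derivative_add has_vector_derivative_scaleR a b has_vector_derivative_const
        lin) 
  moreover have "alpha 0 *\<^sub>R 0 + exp (-1) *\<^sub>R mat 1 + (beta 0 *\<^sub>R (1 *\<^sub>R matA + 0) + ((exp 1 - exp (-1)) / 2) *\<^sub>R (0 *\<^sub>R matA + matB)) = matD"
    unfolding b0 by (simp add: vec_eq_iff forall_2 matA_def matB_def mat_def matD_def complex_eq_iff field_simps)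
  ultimately show ?thesis by simp
qed



lemma borel02_empty: "{} \<in> borel02" by (simp add: borel02_def)

lemma borel02_Diff: "A \<in> borel02 \<Longrightarrow> B \<in> borel02 \<Longrightarrow> A - B \<in> borel02"
  by (auto simp: borel02_def)

lemma borel02_Int: "A \<in> borel02 \<Longrightarrow> B \<in> borel02 \<Longrightarrow> A \<inter> B \<in> borel02"
  by (auto simp: borel02_def)

lemma borel02_UN: "finite J \<Longrightarrow> \<forall>i\<in>J. S i \<in> borel02 \<Longrightarrow> (\<Union>i\<in>J. S i) \<in> borel02"
  unfolding borel02_def by auto

lemma fin_add:
  fixes S :: "nat \<Rightarrow> real set"
  assumes H: "H2_regular_borel_measure M" and fin: "finite J"
    and SJ: "\<forall>i\<in>J. S i \<in> borel02" and dis: "\<forall>i\<in>J. \<forall>j\<in>J. i \<noteq> j \<longrightarrow> S i \<inter> S j = {}"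
  shows "M (\<Union>i\<in>J. S i) = (\<Sum>i\<in>J. M (S i))"
proof -
  define F where "F k = (if k \<in> J then S k else {})" for k
  have M0: "M {} = 0" and ca: "\<forall>F :: nat \<Rightarrow> real set. range F \<subseteq> borel02 \<longrightarrow> disjoint_family F \<longrightarrow>
        (\<lambda>n. M (F n)) sums M (\<Union>n. F n)"
    using H unfolding H2_regular_borel_measure_def by auto
  have "range F \<subseteq> borel02" using SJ borel02_empty by (auto simp: F_def)
  moreover have "disjoint_family F" using dis unfolding disjoint_family_on_def F_def by auto
  ultimately have s1: "(\<lambda>n. M (F n)) sums M (\<Union>n. F n)" using ca by blast
  have "(\<lambda>n. M (F n)) sums (\<Sum>n\<in>J. M (F n))"
    by (rule sums_finite[OF fin]) (simp add: F_def M0)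
  then have "M (\<Union>n. F n) = (\<Sum>n\<in>J. M (F n))" using s1 sums_unique2 by blast
  moreover have "(\<Union>n. F n) = (\<Union>i\<in>J. S i)" by (auto simp: F_def split: if_splits)
  moreover have "(\<Sum>n\<in>J. M (F n)) = (\<Sum>i\<in>J. M (S i))" by (rule sum.cong) (auto simp: F_def)
  ultimately show ?thesis by simp
qed

lemma split_add:
  assumes H: "H2_regular_borel_measure M" and E: "E \<in> borel02" and G: "G \<in> borel02" and GE: "G \<subseteq> E"
  shows "M E = M G + M (E - G)"
proof -
  define S where "S i = (if i = (0::nat) then G else E - G)" for i
  have "M (\<Union>i\<in>{0,1}. S i) = (\<Sum>i\<in>{0,1}. M (S i))"
    by (rule fin_add[OF H]) (auto simp: S_def G borel02_Diff E)
  moreover have "(\<Union>i\<in>{0,1}. S i) = E" using GE by (auto simp: S_def)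
  ultimately show ?thesis by (simp add: S_def)
qed

lemma bounded_range:
  assumes H: "H2_regular_borel_measure M"
  shows "\<exists>B. \<forall>E\<in>borel02. norm (M E) \<le> B"
proof (rule ccontr)
  assume nb: "\<not> ?thesis"
  define U where "U E \<longleftrightarrow> E \<in> borel02 \<and> (\<forall>B. \<exists>F\<in>borel02. F \<subseteq> E \<and> norm (M F) > B)" for E
  have I: "{0..2} \<in> borel02" by (simp add: borel02_def)
  have U02: "U {0..2}" unfolding U_def using nb I by (auto simp: borel02_def not_le)
  have step: "\<exists>F. F \<in> borel02 \<and> F \<subseteq> E \<and> norm (M F) \<ge> 1 \<and> U (E - F)" if UE: "U E" for E
  proof -
    have Eb: "E \<in> borel02" using UE by (simp add: U_def)
    obtain G where G: "G \<in> borel02" "G \<subseteq> E" "norm (M G) > norm (M E) + 1"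
      using UE unfolding U_def by blast
    have "M E = M G + M (E - G)" by (rule split_add[OF H Eb G(1,2)])
    then have "norm (M G) \<le> norm (M E) + norm (M (E - G))"
      by (metis add_diff_cancel_left' norm_triangle_ineq4 add.commute norm_minus_commute)
    then have n1: "norm (M (E - G)) > 1" using G(3) by linarith
    have "U G \<or> U (E - G)"
    proof (rule ccontr)
      assume "\<not> (U G \<or> U (E - G))"
      then obtain B1 B2 where B1: "\<forall>F\<in>borel02. F \<subseteq> G \<longrightarrow> norm (M F) \<le> B1"
        and B2: "\<forall>F\<in>borel02. F \<subseteq> E - G \<longrightarrow> norm (M F) \<le> B2"
        using G(1) Eb borel02_Diff unfolding U_def by (auto simp: not_less) 
      obtain F where F: "F \<in> borel02" "F \<subseteq> E" "norm (M F) > B1 + B2" using UE unfolding U_def by blast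
      have "M F = M (F \<inter> G) + M (F - F \<inter> G)"
        by (rule split_add[OF H F(1) borel02_Int[OF F(1) G(1)]]) auto
      moreover have "F - F \<inter> G = F - G" by auto
      ultimately have "M F = M (F \<inter> G) + M (F - G)" by simp
      then have "norm (M F) \<le> norm (M (F \<inter> G)) + norm (M (F - G))" by (metis norm_triangle_ineq)
      moreover have "norm (M (F \<inter> G)) \<le> B1" using B1 borel02_Int[OF F(1) G(1)] by auto
      moreover have "norm (M (F - G)) \<le> B2" using B2 borel02_Diff[OF F(1) G(1)] F(2) by auto
      ultimately show False using F(3) by linarith
    qed
    then show ?thesis
    proof
      assume "U G"
      moreover have "E - (E - G) = G" using G(2) by auto
      ultimately show ?thesis using n1 borel02_Diff[OF Eb G(1)] by (intro exI[of _ "E - G"]) auto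
    next
      assume "U (E - G)"
      moreover have "norm (M G) \<ge> 1" using G(3) norm_ge_zero[of "M E"] by linarith
      ultimately show ?thesis using G by (intro exI[of _ G]) auto
    qed
  qed
  then obtain f where f: "\<And>E. U E \<Longrightarrow> f E \<in> borel02 \<and> f E \<subseteq> E \<and> norm (M (f E)) \<ge> 1 \<and> U (E - f E)"
    by metis
  define Es where "Es n = ((\<lambda>E. E - f E) ^^ n) {0..2}" for n
  have EsS: "Es (Suc n) = Es n - f (Es n)" for n by (simp add: Es_def)
  have UEs: "U (Es n)" for n
    by (induction n) (auto simp: Es_def U02 f)
  define Fs where "Fs n = f (Es n)" for n
  have Fs: "Fs n \<in> borel02" "Fs n \<subseteq> Es n" "norm (M (Fs n)) \<ge> 1" for n
    using f[OF UEs[of n]] by (auto simp: Fs_def)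
  have mono: "Es m \<subseteq> Es n" if "n \<le> m" for m n
    using that
  proof (induction m)
    case 0 then show ?case by simp
  next
    case (Suc m)
    then show ?case by (cases "n = Suc m") (auto simp: EsS)
  qed
  have "disjoint_family Fs"
    unfolding disjoint_family_on_def
  proof (intro ballI impI)
    fix m n :: nat assume "m \<noteq> n"
    have dj: "Fs a \<inter> Fs b = {}" if "a < b" for a b
    proof -
      have "Fs b \<subseteq> Es (Suc a)" using Fs(2)[of b] mono[of "Suc a" b] that by auto
      then show ?thesis using EsS[of a] by (auto simp: Fs_def)
    qed
    show "Fs m \<inter> Fs n = {}"
      using dj[of m n] dj[of n m] \<open>m \<noteq> n\<close> by (cases "m < n") auto
  qed
  moreover have "range Fs \<subseteq> borel02" using Fs(1) by auto
  ultimately have "(\<lambda>n. M (Fs n)) sums M (\<Union>n. Fs n)"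
    using H unfolding H2_regular_borel_measure_def by blast
  then have "(\<lambda>n. M (Fs n)) \<longlonglongrightarrow> 0" using summable_LIMSEQ_zero sums_summable by blast
  then obtain N where "\<forall>n\<ge>N. norm (M (Fs n) - 0) < 1" using LIMSEQ_D[of _ 0 1] by auto
  then show False using Fs(3)[of N] by auto
qed


lemma abs_sum_bound:
  fixes S :: "nat \<Rightarrow> real set" and \<phi> :: "cmat2 \<Rightarrow> real"
  assumes H: "H2_regular_borel_measure M" and B: "\<forall>E\<in>borel02. norm (M E) \<le> B"
    and lin: "bounded_linear \<phi>" and phb: "\<forall>x. \<bar>\<phi> x\<bar> \<le> norm x"
    and fin: "finite J"
    and SJ: "\<forall>i\<in>J. S i \<in> borel02" and dis: "\<forall>i\<in>J. \<forall>j\<in>J. i \<noteq> j \<longrightarrow> S i \<inter> S j = {}"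
  shows "(\<Sum>i\<in>J. \<bar>\<phi> (M (S i))\<bar>) \<le> 2 * B"
proof -
  have gen: "(\<Sum>i\<in>J'. \<phi> (M (S i))) \<le> B" "- (\<Sum>i\<in>J'. \<phi> (M (S i))) \<le> B" if "J' \<subseteq> J" for J'
  proof -
    have fin': "finite J'" using fin that finite_subset by blast
    have "M (\<Union>i\<in>J'. S i) = (\<Sum>i\<in>J'. M (S i))"
      using fin_add[OF H fin', of S] SJ dis that by blast
    then have "\<phi> (M (\<Union>i\<in>J'. S i)) = (\<Sum>i\<in>J'. \<phi> (M (S i)))"
      using linear_sum[OF bounded_linear.linear[OF lin]] by simp
    moreover have "norm (M (\<Union>i\<in>J'. S i)) \<le> B"
      using B borel02_UN[OF fin', of S] SJ that by blast
    ultimately show "(\<Sum>i\<in>J'. \<phi> (M (S i))) \<le> B" "- (\<Sum>i\<in>J'. \<phi> (M (S i))) \<le> B"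
      using phb[rule_format, of "M (\<Union>i\<in>J'. S i)"] by linarith+
  qed
  define Jp where "Jp = {i\<in>J. \<phi> (M (S i)) \<ge> 0}"
  define Jn where "Jn = {i\<in>J. \<phi> (M (S i)) < 0}"
  have "J = Jp \<union> Jn" "Jp \<inter> Jn = {}" by (auto simp: Jp_def Jn_def)
  then have "(\<Sum>i\<in>J. \<bar>\<phi> (M (S i))\<bar>) = (\<Sum>i\<in>Jp. \<bar>\<phi> (M (S i))\<bar>) + (\<Sum>i\<in>Jn. \<bar>\<phi> (M (S i))\<bar>)"
    using fin by (metis finite_Un sum.union_disjoint)
  also have "(\<Sum>i\<in>Jp. \<bar>\<phi> (M (S i))\<bar>) = (\<Sum>i\<in>Jp. \<phi> (M (S i)))"
    by (rule sum.cong) (auto simp: Jp_def)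
  also have "(\<Sum>i\<in>Jn. \<bar>\<phi> (M (S i))\<bar>) = - (\<Sum>i\<in>Jn. \<phi> (M (S i)))"
    by (subst sum_negf[symmetric], rule sum.cong) (auto simp: Jn_def)
  finally show ?thesis using gen(1)[of Jp] gen(2)[of Jn] by (auto simp: Jp_def Jn_def)
qed

lemma norm_cmat2_le:
  fixes x :: cmat2
  shows "norm x \<le> (\<Sum>p\<in>UNIV. \<Sum>q\<in>UNIV. \<bar>Re (x $ p $ q)\<bar> + \<bar>Im (x $ p $ q)\<bar>)"
proof -
  have "norm x \<le> (\<Sum>p\<in>UNIV. norm (x $ p))"
    unfolding norm_vec_def by (rule L2_set_le_sum) simp
  also have "\<dots> \<le> (\<Sum>p\<in>UNIV. \<Sum>q\<in>UNIV. norm (x $ p $ q))"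
  proof (rule sum_mono)
    fix p show "norm (x $ p) \<le> (\<Sum>q\<in>UNIV. norm (x $ p $ q))"
      unfolding norm_vec_def by (rule L2_set_le_sum) simp
  qed
  also have "\<dots> \<le> (\<Sum>p\<in>UNIV. \<Sum>q\<in>UNIV. \<bar>Re (x $ p $ q)\<bar> + \<bar>Im (x $ p $ q)\<bar>)"
    by (intro sum_mono cmod_le)
  finally show ?thesis .
qed

lemma bl_Re: "bounded_linear (\<lambda>x::cmat2. Re (x $ p $ q))"
  by (intro bounded_linear_compose[OF bounded_linear_Re] bounded_linear_compose[OF bounded_linear_vec_nth] bounded_linear_vec_nth)

lemma bl_Im: "bounded_linear (\<lambda>x::cmat2. Im (x $ p $ q))"
  by (intro bounded_linear_compose[OF bounded_linear_Im] bounded_linear_compose[OF bounded_linear_vec_nth] bounded_linear_vec_nth)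

lemma Re_le: "\<bar>Re ((x::cmat2) $ p $ q)\<bar> \<le> norm x"
  by (meson abs_Re_le_cmod Finite_Cartesian_Product.norm_nth_le order_trans)

lemma Im_le: "\<bar>Im ((x::cmat2) $ p $ q)\<bar> \<le> norm x"
  by (meson abs_Im_le_cmod Finite_Cartesian_Product.norm_nth_le order_trans)

lemma total_variation:
  assumes H: "H2_regular_borel_measure M"
  shows "\<exists>K. \<forall>(J::nat set) S. finite J \<longrightarrow> (\<forall>i\<in>J. S i \<in> borel02) \<longrightarrow>
     (\<forall>i\<in>J. \<forall>j\<in>J. i \<noteq> j \<longrightarrow> S i \<inter> S j = {}) \<longrightarrow> (\<Sum>i\<in>J. norm (M (S i))) \<le> K"
proof -
  obtain B where B: "\<forall>E\<in>borel02. norm (M E) \<le> B" using bounded_range[OF H] by blast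
  show ?thesis
  proof (intro exI[of _ "8 * (2 * B)"] allI impI)
    fix J :: "nat set" and S :: "nat \<Rightarrow> real set"
    assume fin: "finite J" and SJ: "\<forall>i\<in>J. S i \<in> borel02" and dis: "\<forall>i\<in>J. \<forall>j\<in>J. i \<noteq> j \<longrightarrow> S i \<inter> S j = {}"
    have R: "(\<Sum>i\<in>J. \<bar>Re (M (S i) $ p $ q)\<bar>) \<le> 2 * B" for p q
      using abs_sum_bound[OF H B bl_Re, of p q] Re_le fin SJ dis by blast
    have I: "(\<Sum>i\<in>J. \<bar>Im (M (S i) $ p $ q)\<bar>) \<le> 2 * B" for p q
      using abs_sum_bound[OF H B bl_Im, of p q] Im_le fin SJ dis by blast
    have "(\<Sum>i\<in>J. norm (M (S i))) \<le> (\<Sum>i\<in>J. \<Sum>p\<in>UNIV. \<Sum>q\<in>UNIV. \<bar>Re (M (S i) $ p $ q)\<bar> + \<bar>Im (M (S i) $ p $ q)\<bar>)"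
      by (intro sum_mono norm_cmat2_le)
    also have "\<dots> = (\<Sum>p\<in>UNIV. \<Sum>q\<in>UNIV. (\<Sum>i\<in>J. \<bar>Re (M (S i) $ p $ q)\<bar>) + (\<Sum>i\<in>J. \<bar>Im (M (S i) $ p $ q)\<bar>))"
      by (simp add: sum.distrib sum.swap[of _ J])
    also have "\<dots> \<le> (\<Sum>p\<in>(UNIV::2 set). \<Sum>q\<in>(UNIV::2 set). 2 * B + 2 * B)"
      by (intro sum_mono add_mono R I)
    also have "\<dots> = 8 * (2 * B)" by (simp add: sum_2)
    finally show "(\<Sum>i\<in>J. norm (M (S i))) \<le> 8 * (2 * B)" .
  qed
qed



definition RS :: "(real set \<Rightarrow> cmat2) \<Rightarrow> (real set \<times> real) list \<Rightarrow> (real \<Rightarrow> real) \<Rightarrow> cmat2" where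
  "RS M P f = sum_list (map (\<lambda>(S, x). f x *\<^sub>R M S) P)"

lemma has_mintegral_RS: "has_mintegral M f I \<longleftrightarrow>
     (\<forall>\<epsilon>>0. \<exists>d>0. \<forall>P. tagged_borel_partition d P \<longrightarrow> norm (RS M P f - I) < \<epsilon>)"
  unfolding has_mintegral_def RS_def ..

lemma RS_sum: "RS M P f = (\<Sum>i<length P. f (snd (P!i)) *\<^sub>R M (fst (P!i)))"
  unfolding RS_def sum_list_sum_nth by (rule sum.cong) (auto simp: case_prod_beta atLeast0LessThan)

lemma RS_lin:
  assumes fe: "\<And>x. f x = g x + c * (u x - v x)"
  shows "RS M P f = RS M P g + c *\<^sub>R (RS M P u - RS M P v)"
proof -
  have pt: "f x *\<^sub>R m = g x *\<^sub>R m + c *\<^sub>R (u x *\<^sub>R m - v x *\<^sub>R m)" for x and m :: cmat2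
  proof -
    have "f x *\<^sub>R m = g x *\<^sub>R m + (c * (u x - v x)) *\<^sub>R m" unfolding fe by (simp only: scaleR_add_left)
    also have "\<dots> = g x *\<^sub>R m + c *\<^sub>R ((u x - v x) *\<^sub>R m)" by (simp only: scaleR_scaleR)
    also have "\<dots> = g x *\<^sub>R m + c *\<^sub>R (u x *\<^sub>R m - v x *\<^sub>R m)" by (simp only: scaleR_diff_left)
    finally show ?thesis .
  qed
  show ?thesis unfolding RS_sum pt
    by (simp add: sum.distrib sum_subtractf scaleR_sum_right[symmetric])
qed

lemma tagged_mono: "tagged_borel_partition d P \<Longrightarrow> d \<le> d' \<Longrightarrow> tagged_borel_partition d' P"
  unfolding tagged_borel_partition_def by fastforce

lemma R_bound:
  assumes K: "\<forall>(J::nat set) S. finite J \<longrightarrow> (\<forall>i\<in>J. S i \<in> borel02) \<longrightarrow>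
     (\<forall>i\<in>J. \<forall>j\<in>J. i \<noteq> j \<longrightarrow> S i \<inter> S j = {}) \<longrightarrow> (\<Sum>i\<in>J. norm (M (S i))) \<le> K"
    and P: "tagged_borel_partition d P" and h: "\<forall>x\<in>{0..2}. \<bar>h x\<bar> \<le> c"
  shows "norm (RS M P h) \<le> c * K"
proof -
  have mem: "fst (P!i) \<in> borel02 \<and> snd (P!i) \<in> fst (P!i)" if "i < length P" for i
  proof -
    have "P!i \<in> set P" using that by simp
    then show ?thesis using P unfolding tagged_borel_partition_def by (auto simp: case_prod_beta)
  qed
  have x02: "snd (P!i) \<in> {0..2}" if "i < length P" for i
    using mem[OF that] by (auto simp: borel02_def)
  have "norm (RS M P h) \<le> (\<Sum>i<length P. norm (h (snd (P!i)) *\<^sub>R M (fst (P!i))))"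
    unfolding RS_sum by (rule norm_sum)
  also have "\<dots> \<le> (\<Sum>i<length P. c * norm (M (fst (P!i))))"
    using x02 h by (intro sum_mono) (auto intro!: mult_right_mono)
  also have "\<dots> = c * (\<Sum>i<length P. norm (M (fst (P!i))))" by (simp add: sum_distrib_left)
  also have "\<dots> \<le> c * K"
  proof (rule mult_left_mono)
    show "(\<Sum>i<length P. norm (M (fst (P!i)))) \<le> K"
      using K[rule_format, of "{..<length P}" "\<lambda>i. fst (P!i)"] mem P
      unfolding tagged_borel_partition_def by auto
    show "0 \<le> c" using h by (meson abs_ge_zero atLeastAtMost_iff order_trans zero_le_numeral order_refl)
  qed
  finally show ?thesis .
qed

lemma exp_approx:
  fixes t x :: real
  assumes t: "0 < t" "t \<le> 1/2" and x: "x \<in> {0..2}"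
  shows "\<bar>x - (exp (t * x) - exp (0 * x)) / t\<bar> \<le> 4 * t"
proof -
  have y1: "0 \<le> t * x" using t x by simp
  have "t * x \<le> (1/2) * 2" using t x by (intro mult_mono) auto
  then have y: "0 \<le> t * x" "t * x \<le> 1" using y1 by auto
  have lo: "1 + t * x \<le> exp (t * x)" using exp_ge_add_one_self by blast
  have hi: "exp (t * x) \<le> 1 + t * x + (t * x)\<^sup>2" using exp_bound[OF y] .
  have "x - (exp (t * x) - exp (0 * x)) / t = - ((exp (t * x) - 1 - t * x) / t)"
    using t by (simp add: field_simps)
  moreover have nn: "0 \<le> (exp (t * x) - 1 - t * x) / t"
  proof -
    have "0 \<le> exp (t * x) - 1 - t * x" using lo by linarith
    then show ?thesis using t by simp
  qed
  ultimately have "\<bar>x - (exp (t * x) - exp (0 * x)) / t\<bar> = (exp (t * x) - 1 - t * x) / t"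
    by (metis abs_minus_cancel abs_of_nonneg)
  also have "\<dots> \<le> (t * x)\<^sup>2 / t" using hi t by (intro divide_right_mono) auto
  also have "\<dots> = t * x\<^sup>2" using t by (simp add: power2_eq_square)
  also have "\<dots> \<le> t * 4"
  proof -
    have "x\<^sup>2 \<le> 2\<^sup>2" using x by (intro power_mono) auto
    then show ?thesis using t by (intro mult_left_mono) auto
  qed
  finally show ?thesis by simp
qed


lemma integral_x:
  fixes E :: "real \<Rightarrow> cmat2"
  assumes H: "H2_regular_borel_measure M"
    and hyp: "\<forall>t::real. has_mintegral M (\<lambda>x. exp (t * x)) (E t)"
    and der: "(E has_vector_derivative D) (at 0)"
  shows "has_mintegral M (\<lambda>x. x) D"
  unfolding has_mintegral_RS
proof (intro allI impI)
  fix \<epsilon> :: real assume ep: "\<epsilon> > 0"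
  obtain K where K: "\<forall>(J::nat set) S. finite J \<longrightarrow> (\<forall>i\<in>J. S i \<in> borel02) \<longrightarrow>
     (\<forall>i\<in>J. \<forall>j\<in>J. i \<noteq> j \<longrightarrow> S i \<inter> S j = {}) \<longrightarrow> (\<Sum>i\<in>J. norm (M (S i))) \<le> K"
    using total_variation[OF H] by blast
  have K0: "0 \<le> K" using K[rule_format, of "{}"] by simp
  have "((\<lambda>y. norm ((E y - E 0) - (y - 0) *\<^sub>R D) / norm (y - 0)) \<longlongrightarrow> 0) (at 0)"
    using der unfolding has_vector_derivative_def has_derivative_iff_norm by blast
  then have ev: "\<forall>e>0. \<forall>\<^sub>F y in at 0. dist (norm ((E y - E 0) - (y - 0) *\<^sub>R D) / norm (y - 0)) 0 < e"
    unfolding tendsto_iff by blast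
  have "\<forall>\<^sub>F y in at 0. dist (norm ((E y - E 0) - (y - 0) *\<^sub>R D) / norm (y - 0)) 0 < \<epsilon>/3"
    by (rule ev[rule_format]) (use ep in simp)
  then obtain \<delta> where \<delta>: "\<delta> > 0" and
    dq: "\<And>y. y \<noteq> 0 \<Longrightarrow> dist y 0 < \<delta> \<Longrightarrow> norm ((E y - E 0) - y *\<^sub>R D) / \<bar>y\<bar> < \<epsilon>/3"
    unfolding eventually_at by auto
  define t where "t = min (\<delta>/2) (min (1/2) (\<epsilon> / (12 * (K + 1))))"
  have t0: "t > 0" using \<delta> ep K0 by (simp add: t_def)
  have tl: "t < \<delta>" "t \<le> 1/2" "t \<le> \<epsilon> / (12 * (K + 1))" using \<delta> unfolding t_def by linarith+
  have tK: "4 * t * K < \<epsilon> / 3"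
  proof -
    have "4 * t * K \<le> 4 * (\<epsilon> / (12 * (K + 1))) * K" using tl(3) K0 by (intro mult_right_mono) auto
    also have "\<dots> = (\<epsilon> / 3) * (K / (K + 1))" using K0 by (simp add: field_simps)
    also have "\<dots> < \<epsilon> / 3" using K0 ep by (simp add: field_simps)
    finally show ?thesis .
  qed
  define \<eta> where "\<eta> = \<epsilon> * t / 6"
  have \<eta>0: "\<eta> > 0" using ep t0 by (simp add: \<eta>_def)
  obtain d1 where d1: "d1 > 0" "\<forall>P. tagged_borel_partition d1 P \<longrightarrow> norm (RS M P (\<lambda>x. exp (t * x)) - E t) < \<eta>"
    using hyp \<eta>0 unfolding has_mintegral_RS by blast
  obtain d0 where d0: "d0 > 0" "\<forall>P. tagged_borel_partition d0 P \<longrightarrow> norm (RS M P (\<lambda>x. exp (0 * x)) - E 0) < \<eta>"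
    using hyp \<eta>0 unfolding has_mintegral_RS by blast
  show "\<exists>d>0. \<forall>P. tagged_borel_partition d P \<longrightarrow> norm (RS M P (\<lambda>x. x) - D) < \<epsilon>"
  proof (intro exI[of _ "min d0 d1"] conjI allI impI)
    show "min d0 d1 > 0" using d0 d1 by simp
    fix P assume P: "tagged_borel_partition (min d0 d1) P"
    have P0: "tagged_borel_partition d0 P" and P1: "tagged_borel_partition d1 P"
      using tagged_mono[OF P] by auto
    define h where "h x = x - (exp (t * x) - exp (0 * x)) / t" for x
    have lin: "RS M P (\<lambda>x. x) = RS M P h + (1/t) *\<^sub>R (RS M P (\<lambda>x. exp (t * x)) - RS M P (\<lambda>x. exp (0 * x)))"
      by (rule RS_lin) (simp add: h_def)
    have "RS M P (\<lambda>x. x) - D = RS M P h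
        + (1/t) *\<^sub>R ((RS M P (\<lambda>x. exp (t * x)) - E t) - (RS M P (\<lambda>x. exp (0 * x)) - E 0))
        + ((1/t) *\<^sub>R (E t - E 0) - D)"
      unfolding lin by (simp add: algebra_simps)
    also have "norm \<dots> \<le> norm (RS M P h)
        + norm ((1/t) *\<^sub>R ((RS M P (\<lambda>x. exp (t * x)) - E t) - (RS M P (\<lambda>x. exp (0 * x)) - E 0)))
        + norm ((1/t) *\<^sub>R (E t - E 0) - D)"
      by (intro norm_triangle_le add_mono order_refl norm_triangle_ineq)
    also have "\<dots> < \<epsilon>/3 + \<epsilon>/3 + \<epsilon>/3"
    proof -
      have "norm (RS M P h) \<le> (4 * t) * K"
        by (rule R_bound[OF K P]) (use exp_approx[OF t0 tl(2)] in \<open>auto simp: h_def\<close>)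
      then have n1: "norm (RS M P h) < \<epsilon>/3" using tK by simp
      have "norm ((1/t) *\<^sub>R ((RS M P (\<lambda>x. exp (t * x)) - E t) - (RS M P (\<lambda>x. exp (0 * x)) - E 0)))
          = (1/t) * norm ((RS M P (\<lambda>x. exp (t * x)) - E t) - (RS M P (\<lambda>x. exp (0 * x)) - E 0))"
        using t0 by simp
      also have "\<dots> \<le> (1/t) * (2 * \<eta>)"
      proof (rule mult_left_mono)
        show "norm ((RS M P (\<lambda>x. exp (t * x)) - E t) - (RS M P (\<lambda>x. exp (0 * x)) - E 0)) \<le> 2 * \<eta>"
          using d1(2) P1 d0(2) P0 norm_triangle_ineq4[of "RS M P (\<lambda>x. exp (t * x)) - E t" "RS M P (\<lambda>x. exp (0 * x)) - E 0"]
          by fastforce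
      qed (use t0 in simp)
      also have "\<dots> = \<epsilon>/3" using t0 by (simp add: \<eta>_def)
      finally have n2: "norm ((1/t) *\<^sub>R ((RS M P (\<lambda>x. exp (t * x)) - E t) - (RS M P (\<lambda>x. exp (0 * x)) - E 0))) \<le> \<epsilon>/3" .
      have "(1/t) *\<^sub>R (E t - E 0) - D = (1/t) *\<^sub>R ((E t - E 0) - t *\<^sub>R D)"
        using t0 by (simp add: algebra_simps)
      then have "norm ((1/t) *\<^sub>R (E t - E 0) - D) = norm ((E t - E 0) - t *\<^sub>R D) / \<bar>t\<bar>"
        using t0 by simp
      also have "\<dots> < \<epsilon>/3" using dq[of t] t0 tl(1) by simp
      finally have n3: "norm ((1/t) *\<^sub>R (E t - E 0) - D) < \<epsilon>/3" .
      show ?thesis using n1 n2 n3 by linarith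
    qed
    finally show "norm (RS M P (\<lambda>x. x) - D) < \<epsilon>" by simp
  qed
qed



lemma partition_exists:
  assumes d: "d > 0"
  shows "\<exists>P. tagged_borel_partition d P"
proof -
  obtain n :: nat where n: "inverse (real (Suc n)) < d / 2" using reals_Archimedean d by (metis half_gt_zero)
  define N where "N = Suc n"
  define h :: real where "h = 2 / real N"
  have h0: "h > 0" by (simp add: h_def N_def)
  have hd: "h < d" using n by (simp add: h_def N_def field_simps)
  have Npos: "real N > 0" by (simp add: N_def)
  have Nh: "real N * h = 2" using Npos unfolding h_def by simp
  define I where "I k = (if k < N then {real k * h ..< real (Suc k) * h} else {2::real})" for k
  define tg where "tg k = (if k < N then real k * h else 2)" for k
  define P where "P = map (\<lambda>k. (I k, tg k)) [0..<Suc N]"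
  have kle: "real (Suc k) * h \<le> 2" if "k < N" for k
  proof -
    have "real (Suc k) \<le> real N" using that by simp
    then show ?thesis using Nh h0 by (metis mult_right_mono less_imp_le)
  qed
  have c1: "I k \<in> borel02 \<and> tg k \<in> I k \<and> diameter (I k) < d" if "k < Suc N" for k
  proof (cases "k < N")
    case True
    have "0 \<le> real k * h" using h0 by simp
    have sub: "I k \<subseteq> {0..2}"
    proof
      fix x assume "x \<in> I k"
      then have "real k * h \<le> x" "x < real (Suc k) * h" by (simp_all add: I_def True)
      then show "x \<in> {0..2}" using kle[OF True] \<open>0 \<le> real k * h\<close> by auto
    qed
    have "diameter (I k) \<le> diameter {real k * h .. real (Suc k) * h}"
      by (rule diameter_subset) (auto simp: I_def True)
    also have "\<dots> = h" using h0 by (simp add: algebra_simps)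
    finally show ?thesis using sub hd h0 True
      by (auto simp: I_def tg_def borel02_def algebra_simps)
  next
    case False
    then show ?thesis using d by (simp add: I_def tg_def borel02_def borel_closed)
  qed
  have c2: "I i \<inter> I j = {}" if "i < j" "j < Suc N" for i j
  proof (cases "j < N")
    case True
    have "real (Suc i) * h \<le> real j * h" using that h0 by (intro mult_right_mono) auto
    then show ?thesis using True that by (auto simp: I_def)
  next
    case False
    then show ?thesis using that kle[of i] by (auto simp: I_def)
  qed
  have c3: "(\<Union>k\<in>{0..<Suc N}. I k) = {0..2}"
  proof
    show "(\<Union>k\<in>{0..<Suc N}. I k) \<subseteq> {0..2}"
    proof (rule UN_least)
      fix k assume "k \<in> {0..<Suc N}"
      then have "I k \<in> borel02" using c1 by auto
      then show "I k \<subseteq> {0..2}" by (simp add: borel02_def)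
    qed
    show "{0..2} \<subseteq> (\<Union>k\<in>{0..<Suc N}. I k)"
    proof
      fix y :: real assume y: "y \<in> {0..2}"
      show "y \<in> (\<Union>k\<in>{0..<Suc N}. I k)"
      proof (cases "y = 2")
        case True then show ?thesis by (intro UN_I[of N]) (auto simp: I_def)
      next
        case False
        define k where "k = nat \<lfloor>y / h\<rfloor>"
        have yh: "0 \<le> y / h" using y h0 by simp
        have k1: "real k \<le> y / h" using yh by (simp add: k_def)
        have k2: "y / h < real k + 1" using yh by (simp add: k_def)
        have "y / h < real N" using False y h0 Nh by (simp add: field_simps)
        then have kN: "k < N" using k1 by linarith
        have "real k * h \<le> y" "y < real (Suc k) * h" using k1 k2 h0 by (simp_all add: field_simps)
        then show ?thesis using kN by (intro UN_I[of k]) (auto simp: I_def)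
      qed
    qed
  qed
  have "tagged_borel_partition d P"
    unfolding tagged_borel_partition_def
  proof (intro conjI allI impI)
    show "\<forall>(S, x)\<in>set P. S \<in> borel02 \<and> x \<in> S \<and> diameter S < d"
      using c1 by (auto simp: P_def)
    show "fst (P ! i) \<inter> fst (P ! j) = {}" if "i < length P" "j < length P" "i \<noteq> j" for i j
    proof -
      have "fst (P ! i) = I i" "fst (P ! j) = I j" using that by (simp_all add: P_def del: upt_Suc)
      then show ?thesis using that c2[of i j] c2[of j i] by (cases "i < j") (auto simp: P_def Int_commute)
    qed
    show "\<Union> (fst ` set P) = {0..2}" using c3 by (simp add: P_def image_image del: upt_Suc)
  qed
  then show ?thesis by blast
qed



definition Qf :: "complex^2 \<Rightarrow> cmat2 \<Rightarrow> real" where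
  "Qf \<xi> S = Re (\<Sum>p\<in>UNIV. \<Sum>q\<in>UNIV. S $ p $ q * \<xi> $ p * cnj (\<xi> $ q))"

lemma Qf_add: "Qf \<xi> (a + b) = Qf \<xi> a + Qf \<xi> b"
  by (simp add: Qf_def sum_2 algebra_simps)

lemma Qf_scale: "Qf \<xi> (c *\<^sub>R a) = c * Qf \<xi> a"
proof -
  have "(\<Sum>p\<in>UNIV. \<Sum>q\<in>UNIV. (c *\<^sub>R a) $ p $ q * \<xi> $ p * cnj (\<xi> $ q))
      = c *\<^sub>R (\<Sum>p\<in>UNIV. \<Sum>q\<in>UNIV. a $ p $ q * \<xi> $ p * cnj (\<xi> $ q))"
    by (simp add: scaleR_sum_right)
  then show ?thesis unfolding Qf_def by simp
qed

lemma Qf_RS_nonneg: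
  assumes nn: "nonneg_measure M" and P: "\<forall>(S, x)\<in>set P. S \<in> borel02 \<and> x \<in> S"
  shows "0 \<le> Qf \<xi> (RS M P (\<lambda>x. x))"
  using P
proof (induction P)
  case Nil then show ?case by (simp add: RS_def Qf_def)
next
  case (Cons a P)
  obtain S x where a: "a = (S, x)" by fastforce
  have S: "S \<in> borel02" "x \<in> S" using Cons.prems a by auto
  then have x0: "0 \<le> x" by (auto simp: borel02_def)
  have "0 \<le> Qf \<xi> (M S)" using nn S(1) unfolding nonneg_measure_def nonneg_mat_def Qf_def by blast
  then have "0 \<le> x * Qf \<xi> (M S)" using x0 by simp
  moreover have "0 \<le> Qf \<xi> (RS M P (\<lambda>x. x))" using Cons by simp
  moreover have "RS M (a # P) (\<lambda>x. x) = x *\<^sub>R M S + RS M P (\<lambda>x. x)" by (simp add: RS_def a)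
  ultimately show ?case by (simp add: Qf_add Qf_scale)
qed

lemma e_ge: "exp (1::real) \<ge> 5/2"
  using exp_lower_Taylor_quadratic[of "1::real"] by simp

lemma not_nonneg:
  assumes I: "has_mintegral M (\<lambda>x. x) matD"
  shows "\<not> nonneg_measure M"
proof
  assume nn: "nonneg_measure M"
  define \<xi> :: "complex^2" where "\<xi> = (\<chi> i. if i = 1 then 1 else - complex_of_real (exp 1))"
  have "\<forall>n. \<exists>P. tagged_borel_partition (inverse (real (Suc n))) P"
    using partition_exists by simp
  then obtain Ps where Ps: "\<And>n. tagged_borel_partition (inverse (real (Suc n))) (Ps n)" by metis
  have lim: "(\<lambda>n. RS M (Ps n) (\<lambda>x. x)) \<longlonglongrightarrow> matD"
  proof (rule LIMSEQ_I)
    fix r :: real assume r: "r > 0"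
    obtain d where d: "d > 0" "\<forall>P. tagged_borel_partition d P \<longrightarrow> norm (RS M P (\<lambda>x. x) - matD) < r"
      using I r unfolding has_mintegral_RS by blast
    obtain no :: nat where no: "inverse (real (Suc no)) < d" using reals_Archimedean d(1) by blast
    show "\<exists>no. \<forall>n\<ge>no. norm (RS M (Ps n) (\<lambda>x. x) - matD) < r"
    proof (intro exI allI impI)
      fix n assume "no \<le> n"
      then have "inverse (real (Suc n)) \<le> inverse (real (Suc no))"
        by (simp add: le_imp_inverse_le)
      then have "inverse (real (Suc n)) \<le> d" using no by linarith
      then have "tagged_borel_partition d (Ps n)" by (rule tagged_mono[OF Ps])
      then show "norm (RS M (Ps n) (\<lambda>x. x) - matD) < r" using d(2) by blast
    qed
  qed
  have "(\<lambda>n. Qf \<xi> (RS M (Ps n) (\<lambda>x. x))) \<longlonglongrightarrow> Qf \<xi> matD"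
    unfolding Qf_def by (intro tendsto_intros tendsto_vec_nth lim)
  moreover have "\<forall>n. 0 \<le> Qf \<xi> (RS M (Ps n) (\<lambda>x. x))"
    using Ps Qf_RS_nonneg[OF nn] unfolding tagged_borel_partition_def by (metis (no_types, lifting) case_prodI2 case_prodD)
  ultimately have "0 \<le> Qf \<xi> matD" by (intro LIMSEQ_le_const) auto
  moreover have "Qf \<xi> matD = 2 * exp 1 - (exp 1)\<^sup>2 + 1"
    by (simp add: Qf_def sum_2 matD_def \<xi>_def exp_minus field_simps power2_eq_square)
  moreover have "2 * exp 1 - (exp 1)\<^sup>2 + 1 < (0::real)"
  proof -
    have "0 \<le> (exp 1 - 5/2) * (exp 1 + 1/2::real)" using e_ge by (intro mult_nonneg_nonneg) auto
    then show ?thesis by (simp add: algebra_simps power2_eq_square)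
  qed
  ultimately show False by linarith
qed

lemma det_D: "det matD = complex_of_real ((6 - exp 2 - exp (-2)) / 4)"
proof -
  have "det matD = complex_of_real (exp 1 * exp (-1) - ((exp 1 - exp (-1))/2)^2)"
    by (simp add: det_2 matD_def power2_eq_square)
  moreover have "exp 1 * exp (-1) - ((exp 1 - exp (-1))/2)^2 = (6 - exp 2 - exp (-2)) / (4::real)"
  proof -
    have a: "exp 1 * exp (-1) = (1::real)" by (simp add: exp_minus)
    have b: "exp 2 = exp 1 * (exp 1::real)" by (simp flip: exp_add)
    have c: "exp (-2) = exp (-1) * (exp (-1)::real)" by (simp flip: exp_add)
    have q: "((exp 1 - exp (-1))/2)^2 = (exp 1 * exp 1 - 2 * (exp 1 * exp (-1)) + exp (-1) * exp (-1)) / (4::real)"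
      by (simp add: power2_eq_square field_simps)
    show ?thesis unfolding b c q a by (simp add: field_simps)
  qed
  ultimately show ?thesis by simp
qed

lemma ineq: "(6 - exp 2 - exp (-2)) / 4 < (0::real)"
proof -
  have b: "exp 2 = exp 1 * (exp 1::real)" by (simp flip: exp_add)
  have h1: "(5/2) * (5/2) \<le> exp 1 * (exp 1::real)" using e_ge by (intro mult_mono) auto
  have h2: "exp (-2::real) > 0" by simp
  have h3: "6 < exp 1 * (exp 1::real)" using h1 by simp
  have h4: "exp 1 * exp 1 < exp 1 * exp 1 + exp (-2::real)" using h2 by simp
  have "6 < exp 1 * exp 1 + exp (-2::real)" using h3 h4 by (rule less_trans)
  then show ?thesis unfolding b by simp
qed

theorem mainTheorem2:
  fixes M :: "real set \<Rightarrow> cmat2"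
  assumes "H2_regular_borel_measure M"
    and "\<forall>t::real. has_mintegral M (\<lambda>x. exp (t * x)) (mexp (t *\<^sub>R matA + matB))"
  shows "((\<lambda>t::real. mexp (t *\<^sub>R matA + matB)) has_vector_derivative matD) (at 0)
    \<and> has_mintegral M (\<lambda>x. x) matD
    \<and> det matD = complex_of_real ((6 - exp 2 - exp (-2)) / 4)
    \<and> (6 - exp 2 - exp (-2)) / 4 < (0::real)
    \<and> \<not> nonneg_measure M"
proof -
  have der: "((\<lambda>t::real. mexp (t *\<^sub>R matA + matB)) has_vector_derivative matD) (at 0)"
    unfolding mexp_formula by (rule deriv_formula)
  have int: "has_mintegral M (\<lambda>x. x) matD"
    by (rule integral_x[OF assms(1) assms(2) der])
  show ?thesis using der int det_D ineq not_nonneg[OF int] by blast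
qed

end
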